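(* In the setting described in the context, let $u_1=\min\{x\in[d,v]: f^{2}(x)=d\}$, $\breve u_0'=\max\{x\in[u_1,v]: f^2(x)=d\}$, and for $n\ge1$ let $\breve\mu_{m,n}=\min\{x\in[\breve u_0',v]: f^{m+2n}(x)=d\}$ (these sets are nonempty). Then for each $n\ge1$, every periodic point of $f$ in $[\breve u_0',\breve\mu_{m,n}]$ whose least period is odd has least period $\ge m+2n$.
   Context: Let $I$ be a compact interval and $f:I\to I$ continuous; $f^1=f$, $f^n=f\circ f^{n-1}$. A point $x_0$ is a periodic point of least period $k$ (a period-$k$ point) if $f^k(x_0)=x_0$ and $f^i(x_0)\ne x_0$ for $0<i<k$. Let $m\ge3$ be odd and let $P$ be a periodic orbit of $f$ of least period $m$. Put $e=f^{m-1}(\min P)$. Let $v\in[\min P,e)$ be a point with $f(v)=e$, and let $z\in(v,e)$ be a fixed point of $f$ (such points exist). Define $z_0=\min\{x\in[v,z]: f^2(x)=x\}$ and $d=\max\{x\in[\min P,v]: f^2(x)=z_0\}$ (both sets are nonempty). *)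

theory Defs
  imports "HOL-Analysis.Analysis"
begin

definition least_period :: "(real \<Rightarrow> real) \<Rightarrow> nat \<Rightarrow> real \<Rightarrow> bool" where
  "least_period f k x \<longleftrightarrow> 0 < k \<and> (f ^^ k) x = x \<and> (\<forall>i. 0 < i \<and> i < k \<longrightarrow> (f ^^ i) x \<noteq> x)"

definition periodic_orbit :: "(real \<Rightarrow> real) \<Rightarrow> real set \<Rightarrow> nat \<Rightarrow> real set \<Rightarrow> bool" where
  "periodic_orbit f S k P \<longleftrightarrow>
     (\<exists>p\<in>S. least_period f k p \<and> P = {(f ^^ i) p | i. i < k})"

end

theory Submission
  imports Defs
begin


lemma iter_props:
  assumes "continuous_on {a..b} f" "f ` {a..b} \<subseteq> {a..b}"
  shows "continuous_on {a..b} (f^^n) \<and> (f^^n) ` {a..b} \<subseteq> {a..b}"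
proof (induction n)
  case 0 then show ?case by (simp add: continuous_on_id)
next
  case (Suc n)
  then have c: "continuous_on {a..b} (f^^n)" and s: "(f^^n) ` {a..b} \<subseteq> {a..b}" by auto
  have "continuous_on {a..b} (f \<circ> (f^^n))"
    by (rule continuous_on_compose[OF c continuous_on_subset[OF assms(1) s]])
  moreover have "(f \<circ> (f^^n)) ` {a..b} \<subseteq> {a..b}" using s assms(2) by (auto simp: image_subset_iff)
  ultimately show ?case by simp
qed

lemma cover:
  fixes g :: "real \<Rightarrow> real"
  assumes "continuous_on {s..t} g" "s \<le> t" "min (g s) (g t) \<le> c" "c \<le> max (g s) (g t)"
  shows "\<exists>x\<in>{s..t}. g x = c"
proof (cases "g s \<le> g t")
  case True
  then have "g s \<le> c" "c \<le> g t" using assms by auto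
  then show ?thesis using IVT'[where f=g and a=s and b=t and y=c] assms by auto
next
  case False
  then have "g t \<le> c" "c \<le> g s" using assms by auto
  then show ?thesis using IVT2'[where f=g and a=s and b=t and y=c] assms by auto
qed

lemma fpa: "(f^^(m+n)) x = (f^^m) ((f^^n) x)"
  by (simp add: funpow_add)

lemma fix2_iter:
  assumes "(f^^2) z = z"
  shows "(f^^(2*i)) z = z \<and> (f^^(2*i+1)) z = f z"
proof (induction i)
  case 0 show ?case by simp
next
  case (Suc i)
  have "(f^^(2*Suc i)) z = (f^^(2*i)) ((f^^2) z)" using fpa[where f=f and m="2*i" and n=2 and x=z] by (simp add: algebra_simps)
  moreover have "(f^^(2*Suc i+1)) z = (f^^(2*i+1)) ((f^^2) z)" using fpa[where f=f and m="2*i+1" and n=2 and x=z] by (simp add: algebra_simps)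
  ultimately show ?case using Suc assms by simp
qed

lemma fix_iter:
  assumes "(f^^k) y = y"
  shows "(f^^(k*r)) y = y"
proof (induction r)
  case 0 show ?case by simp
next
  case (Suc r)
  have "(f^^(k*Suc r)) y = (f^^(k*r)) ((f^^k) y)" using fpa[where f=f and m="k*r" and n=k and x=y] by (simp add: algebra_simps)
  then show ?case using Suc assms by simp
qed

lemma attained:
  fixes h :: "real \<Rightarrow> real"
  assumes "continuous_on {s..t} h" "S = {x\<in>{s..t}. h x = c}" "S \<noteq> {}"
  shows "Inf S \<in> S \<and> Sup S \<in> S \<and> (\<forall>x\<in>S. Inf S \<le> x \<and> x \<le> Sup S)"
proof -
  have cl: "closed S" using continuous_closed_preimage_constant[OF assms(1)] assms(2) by auto
  have bb: "bdd_below S" "bdd_above S" using assms(2) by (auto intro!: bdd_belowI bdd_aboveI)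
  show ?thesis using closed_contains_Inf[OF assms(3) bb(1) cl] closed_contains_Sup[OF assms(3) bb(2) cl]
      cInf_lower[OF _ bb(1)] cSup_upper[OF _ bb(2)] by auto
qed


theorem lemma9:
  fixes f :: "real \<Rightarrow> real" and a b :: real and m n :: nat and P :: "real set"
    and v z :: real
  assumes ab: "a \<le> b"
    and cont: "continuous_on {a..b} f"
    and maps: "f ` {a..b} \<subseteq> {a..b}"
    and m_odd: "odd m" and m_ge: "m \<ge> 3"
    and orb: "periodic_orbit f {a..b} m P"
    and v_in: "v \<in> {Min P ..< (f ^^ (m - 1)) (Min P)}"
    and v_map: "f v = (f ^^ (m - 1)) (Min P)"
    and z_in: "z \<in> {v <..< (f ^^ (m - 1)) (Min P)}"
    and z_fix: "f z = z"
    and n_ge: "n \<ge> 1"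
  defines "z0 \<equiv> Inf {x \<in> {v..z}. (f ^^ 2) x = x}"
  defines "d \<equiv> Sup {x \<in> {Min P..v}. (f ^^ 2) x = z0}"
  defines "u1 \<equiv> Inf {x \<in> {d..v}. (f ^^ 2) x = d}"
  defines "u0' \<equiv> Sup {x \<in> {u1..v}. (f ^^ 2) x = d}"
  defines "mu \<equiv> Inf {x \<in> {u0'..v}. (f ^^ (m + 2 * n)) x = d}"
  shows "\<forall>y \<in> {u0'..mu}. \<forall>k. least_period f k y \<and> odd k \<longrightarrow> k \<ge> m + 2 * n"
proof -
  define mP where "mP = Min P"
  define E where "E = (f ^^ (m - 1)) mP"
  define K where "K = m + 2 * n"
  have contn: "\<And>N. continuous_on {a..b} (f^^N)" using iter_props[OF cont maps] by blast
  have mapn: "\<And>N x. x \<in> {a..b} \<Longrightarrow> (f^^N) x \<in> {a..b}" using iter_props[OF cont maps] by blast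
  have cov: "\<And>N s t c. a \<le> s \<Longrightarrow> t \<le> b \<Longrightarrow> s \<le> t \<Longrightarrow> min ((f^^N) s) ((f^^N) t) \<le> c
      \<Longrightarrow> c \<le> max ((f^^N) s) ((f^^N) t) \<Longrightarrow> \<exists>x\<in>{s..t}. (f^^N) x = c"
  proof -
    fix N s t c
    assume h: "a \<le> s" "t \<le> b" "s \<le> t" "min ((f^^N) s) ((f^^N) t) \<le> c" "c \<le> max ((f^^N) s) ((f^^N) t)"
    have "continuous_on {s..t} (f^^N)" using continuous_on_subset[OF contn] h by auto
    then show "\<exists>x\<in>{s..t}. (f^^N) x = c" using cover h by blast
  qed
  have contS: "\<And>N s t. a \<le> s \<Longrightarrow> t \<le> b \<Longrightarrow> continuous_on {s..t} (f^^N)"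
    by (rule continuous_on_subset[OF contn]) auto
  obtain p where p: "p \<in> {a..b}" "least_period f m p" "P = {(f ^^ i) p | i. i < m}"
    using orb unfolding periodic_orbit_def by blast
  have m0: "0 < m" "(f^^m) p = p" using p(2) unfolding least_period_def by auto
  have Pim: "P = (\<lambda>i. (f^^i) p) ` {..<m}" using p(3) by auto
  have finP: "finite P" using Pim by simp
  have neP: "P \<noteq> {}" using Pim m0 by auto
  have Pab: "\<And>q. q \<in> P \<Longrightarrow> q \<in> {a..b}" using Pim mapn p(1) by auto
  have Pf: "\<And>q. q \<in> P \<Longrightarrow> f q \<in> P"
  proof -
    fix q assume "q \<in> P"
    then obtain i where i: "i < m" "q = (f^^i) p" using Pim by auto
    have fq: "f q = (f^^Suc i) p" using i by simp
    show "f q \<in> P"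
    proof (cases "Suc i < m")
      case True then show ?thesis using fq Pim by (metis image_eqI lessThan_iff)
    next
      case False then have "Suc i = m" using i by auto
      then have "f q = (f^^0) p" using fq m0 by simp
      then show ?thesis using Pim m0 by (metis image_eqI lessThan_iff)
    qed
  qed
  have Piter: "\<And>q j. q \<in> P \<Longrightarrow> (f^^j) q \<in> P"
  proof -
    fix q j assume "q \<in> P"
    then show "(f^^j) q \<in> P" by (induction j) (auto intro: Pf)
  qed
  have Pm: "\<And>q. q \<in> P \<Longrightarrow> (f^^m) q = q"
  proof -
    fix q assume "q \<in> P"
    then obtain i where i: "q = (f^^i) p" using Pim by auto
    have "(f^^m) q = (f^^(m+i)) p" using i fpa[where f=f and m=m and n=i] by simp
    also have "\<dots> = (f^^i) ((f^^m) p)" using fpa[where f=f and m=i and n=m] by (simp add: add.commute)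
    finally show "(f^^m) q = q" using i m0 by simp
  qed
  have mPP: "mP \<in> P" using Min_in[OF finP neP] mP_def by simp
  have mPle: "\<And>q. q \<in> P \<Longrightarrow> mP \<le> q" using Min_le[OF finP] mP_def by simp
  have EP: "E \<in> P" using Piter[OF mPP] E_def by simp
  have vE: "mP \<le> v" "v < E" using v_in mP_def E_def by auto
  have zE: "v < z" "z < E" using z_in mP_def E_def by auto
  have fv: "f v = E" using v_map mP_def E_def by simp
  have f2: "\<And>x. (f^^2) x = f (f x)" by (simp add: numeral_2_eq_2)
  have fE: "f E = mP"
  proof -
    have "f E = (f^^(Suc (m-1))) mP" using E_def by simp
    also have "Suc (m-1) = m" using m0 by simp
    finally show ?thesis using Pm[OF mPP] by simp
  qed
  have f2v: "(f^^2) v = mP" using f2 fv fE by simp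
  have mPab: "mP \<in> {a..b}" "E \<in> {a..b}" using Pab mPP EP by auto
  have inab: "\<And>x. mP \<le> x \<Longrightarrow> x \<le> E \<Longrightarrow> x \<in> {a..b}" using mPab by auto
  have nfix: "(f^^2) mP \<noteq> mP"
  proof
    assume h: "(f^^2) mP = mP"
    have "m - 1 = 2 * ((m-1) div 2)" using m_odd m0 by presburger
    then have "E = (f^^(2 * ((m-1) div 2))) mP" using E_def by metis
    then have "E = mP" using fix2_iter[OF h] by simp
    then show False using vE by simp
  qed
  have mPv: "mP < v" proof (rule ccontr) assume "\<not> mP < v" then have "v = mP" using vE by simp then show False using nfix f2v by simp qed
  define S0 where "S0 = {x \<in> {v..z}. (f ^^ 2) x - x = 0}"
  have S0eq: "{x \<in> {v..z}. (f ^^ 2) x = x} = S0" unfolding S0_def by auto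
  have cS0: "continuous_on {v..z} (\<lambda>x. (f^^2) x - x)"
    using contS[of v z 2] inab vE zE by (auto intro!: continuous_intros)
  have "z \<in> S0" using z_fix zE f2 unfolding S0_def by auto
  then have S0ne: "S0 \<noteq> {}" by auto
  note at0 = attained[OF cS0 S0_def S0ne]
  have z0S: "z0 \<in> S0" using at0 z0_def S0eq by simp
  have z0b: "v \<le> z0" "z0 \<le> z" "(f^^2) z0 = z0" using z0S unfolding S0_def by auto
  have z0min: "\<And>x. v \<le> x \<Longrightarrow> x < z0 \<Longrightarrow> (f^^2) x \<noteq> x"
  proof
    fix x assume h: "v \<le> x" "x < z0" "(f^^2) x = x"
    then have "x \<in> S0" using z0b unfolding S0_def by auto
    then have "z0 \<le> x" using at0 z0_def S0eq by simp
    then show False using h by simp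
  qed
  have vz0: "v < z0" proof (rule ccontr) assume "\<not> v < z0" then have "z0 = v" using z0b by simp then show False using z0b f2v mPv by simp qed
  have z0ab: "z0 \<in> {a..b}" using inab z0b vE zE by auto
  have wz: "z0 \<le> f z0"
  proof (rule ccontr)
    assume "\<not> z0 \<le> f z0"
    then have h: "f z0 - z0 \<le> 0" "0 \<le> f v - v" using fv vE by auto
    have "continuous_on {v..z0} (\<lambda>x. f x - x)"
      using contS[of v z0 1] inab vE zE z0b by (auto intro!: continuous_intros)
    then obtain x where x: "v \<le> x" "x \<le> z0" "f x - x = 0"
      using IVT2'[where f="\<lambda>x. f x - x" and a=v and b=z0 and y=0] h vz0 by auto
    have "x \<noteq> z0" using x \<open>\<not> z0 \<le> f z0\<close> by auto
    then have "x < z0" using x by auto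
    moreover have "(f^^2) x = x" using x f2 by simp
    ultimately show False using z0min x by blast
  qed
  have below: "\<And>x. v \<le> x \<Longrightarrow> x < z0 \<Longrightarrow> (f^^2) x < x"
  proof (rule ccontr)
    fix x assume h: "v \<le> x" "x < z0" "\<not> (f^^2) x < x"
    then have h2: "(f^^2) x - x \<ge> 0" "(f^^2) v - v \<le> 0" using f2v mPv by auto
    have "continuous_on {v..x} (\<lambda>x. (f^^2) x - x)"
      using contS[of v x 2] inab vE zE z0b h by (auto intro!: continuous_intros)
    then obtain t where t: "v \<le> t" "t \<le> x" "(f^^2) t - t = 0"
      using IVT'[where f="\<lambda>x. (f^^2) x - x" and a=v and b=x and y=0] h2 h by auto
    then show False using z0min h by auto
  qed
  have qex: "\<exists>q\<in>P. q < z0 \<and> z0 \<le> (f^^2) q"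
  proof (rule ccontr)
    assume "\<not> ?thesis"
    then have hq: "\<And>q. q \<in> P \<Longrightarrow> q < z0 \<Longrightarrow> (f^^2) q < z0" by force
    have "\<And>i. (f^^(2*i)) mP < z0 \<and> (f^^(2*i)) mP \<in> P"
    proof -
      fix i show "(f^^(2*i)) mP < z0 \<and> (f^^(2*i)) mP \<in> P"
      proof (induction i)
        case 0 show ?case using mPP mPv vz0 by simp
      next
        case (Suc i)
        have "(f^^(2*Suc i)) mP = (f^^2) ((f^^(2*i)) mP)"
          using fpa[where f=f and m=2 and n="2*i" and x=mP] by simp
        then show ?case using Suc hq Piter by simp
      qed
    qed
    moreover have "m - 1 = 2 * ((m-1) div 2)" using m_odd m0 by presburger
    ultimately have "E < z0" using E_def by metis
    then show False using zE z0b by simp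
  qed
  then obtain q where q: "q \<in> P" "q < z0" "z0 \<le> (f^^2) q" by blast
  have qv: "q < v"
  proof (rule ccontr)
    assume "\<not> q < v" then have "(f^^2) q < q" using below q by simp
    then show False using q by simp
  qed
  have qab: "mP \<le> q" using mPle q by simp
  define Sd where "Sd = {x \<in> {mP..v}. (f ^^ 2) x = z0}"
  have Sdne: "Sd \<noteq> {}"
  proof (cases "(f^^2) q = z0")
    case True then have "q \<in> Sd" using qv qab unfolding Sd_def by auto
    then show ?thesis by auto
  next
    case False
    then have "min ((f^^2) q) ((f^^2) v) \<le> z0" "z0 \<le> max ((f^^2) q) ((f^^2) v)"
      using q f2v mPv vz0 by auto
    then obtain x where "x \<in> {q..v}" "(f^^2) x = z0" using cov[of q v 2 z0] qv qab mPab inab vE by auto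
    then show ?thesis using qab unfolding Sd_def by auto
  qed
  have cSd: "continuous_on {mP..v} (f^^2)" using contS inab vE mPab by auto
  note atd = attained[OF cSd Sd_def Sdne]
  have dS: "d \<in> Sd" using atd d_def Sd_def mP_def by simp
  have db: "mP \<le> d" "d \<le> v" "(f^^2) d = z0" using dS unfolding Sd_def by auto
  have dv: "d < v" proof (rule ccontr) assume "\<not> d < v" then have "d = v" using db by simp then show False using db f2v mPv vz0 by simp qed
  define S1 where "S1 = {x \<in> {d..v}. (f ^^ 2) x = d}"
  have S1ne: "S1 \<noteq> {}"
  proof -
    have "min ((f^^2) d) ((f^^2) v) \<le> d" "d \<le> max ((f^^2) d) ((f^^2) v)"
      using db f2v dv vz0 by auto
    then obtain x where "x \<in> {d..v}" "(f^^2) x = d" using cov[of d v 2 d] db dv mPab inab vE by auto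
    then show ?thesis unfolding S1_def by auto
  qed
  have cS1: "continuous_on {d..v} (f^^2)" using contS inab vE mPab db by auto
  note at1 = attained[OF cS1 S1_def S1ne]
  have u1S: "u1 \<in> S1" using at1 u1_def S1_def by simp
  have u1b: "d \<le> u1" "u1 \<le> v" "(f^^2) u1 = d" using u1S unfolding S1_def by auto
  have du1: "d < u1" proof (rule ccontr) assume "\<not> d < u1" then have "d = u1" using u1b by simp then show False using u1b db dv vz0 by simp qed
  define S2 where "S2 = {x \<in> {u1..v}. (f ^^ 2) x = d}"
  have S2ne: "S2 \<noteq> {}" using u1b unfolding S2_def by auto
  have cS2: "continuous_on {u1..v} (f^^2)" using contS inab vE mPab db u1b by auto
  note at2 = attained[OF cS2 S2_def S2ne]
  have u0S: "u0' \<in> S2" using at2 u0'_def S2_def by simp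
  have u0b: "u1 \<le> u0'" "u0' \<le> v" "(f^^2) u0' = d" using u0S unfolding S2_def by auto
  have after: "\<And>x. u0' < x \<Longrightarrow> x \<le> v \<Longrightarrow> (f^^2) x \<le> d"
  proof (rule ccontr)
    fix x assume h: "u0' < x" "x \<le> v" "\<not> (f^^2) x \<le> d"
    then have mn: "min ((f^^2) x) ((f^^2) v) \<le> d" and mx: "d \<le> max ((f^^2) x) ((f^^2) v)"
      using f2v db by auto
    have ax: "a \<le> x" using mPab h u0b u1b db by auto
    have vb: "v \<le> b" using mPab vE by auto
    obtain t where t: "t \<in> {x..v}" "(f^^2) t = d"
      using cov[OF ax vb h(2) mn mx] by blast
    then have "t \<in> S2" using h u0b unfolding S2_def by auto
    then have "t \<le> u0'" using at2 u0'_def S2_def by simp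
    then show False using t h by simp
  qed
  have vb: "v \<le> b" using mPab vE by auto
  have am: "a \<le> mP" using mPab by auto
  have oddz0: "\<And>r. odd r \<Longrightarrow> (f^^r) z0 = f z0"
  proof -
    fix r :: nat assume "odd r"
    then have "r = 2 * (r div 2) + 1" by presburger
    then show "(f^^r) z0 = f z0" using fix2_iter[OF z0b(3)] by metis
  qed
  have itz0: "\<And>r. z0 \<le> (f^^r) z0"
  proof -
    fix r :: nat
    show "z0 \<le> (f^^r) z0"
    proof (cases "even r")
      case True then have "r = 2 * (r div 2)" by presburger
      then have "(f^^r) z0 = z0" using fix2_iter[OF z0b(3)] by metis
      then show ?thesis by simp
    next
      case False then show ?thesis using oddz0 wz by simp
    qed
  qed
  have u0odd: "\<And>j. odd j \<Longrightarrow> 5 \<le> j \<Longrightarrow> (f^^j) u0' = f z0"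
  proof -
    fix j :: nat assume h: "odd j" "5 \<le> j"
    have e: "j = (j-4) + 2 + 2" using h by simp
    have "(f^^j) u0' = (f^^((j-4)+2+2)) u0'" using e by metis
    also have "\<dots> = (f^^(j-4)) ((f^^2) ((f^^2) u0'))" by (simp only: fpa)
    also have "\<dots> = (f^^(j-4)) z0" using u0b db by simp
    also have "\<dots> = f z0" using h oddz0 by simp
    finally show "(f^^j) u0' = f z0" .
  qed
  have fmd: "(f^^m) d = f z0"
  proof -
    have e: "m = (m-2)+2" using m_ge by simp
    have "(f^^m) d = (f^^((m-2)+2)) d" using e by metis
    also have "\<dots> = (f^^(m-2)) ((f^^2) d)" by (simp only: fpa)
    also have "\<dots> = f z0" using db oddz0 m_odd m_ge by simp
    finally show ?thesis .
  qed
  have L2: "\<And>i c. mP \<le> c \<Longrightarrow> c \<le> z0 \<Longrightarrow> \<exists>x\<in>{v..z0}. (f^^(2*Suc i)) x = c"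
  proof -
    have base: "\<And>c. mP \<le> c \<Longrightarrow> c \<le> z0 \<Longrightarrow> \<exists>x\<in>{v..z0}. (f^^2) x = c"
    proof -
      fix c assume "mP \<le> c" "c \<le> z0"
      then have mn: "min ((f^^2) v) ((f^^2) z0) \<le> c" and mx: "c \<le> max ((f^^2) v) ((f^^2) z0)"
        using f2v z0b by auto
      have av: "a \<le> v" using am vE by simp
      have zb: "z0 \<le> b" using z0ab by simp
      show "\<exists>x\<in>{v..z0}. (f^^2) x = c" using cov[OF av zb _ mn mx] vz0 by simp
    qed
    fix i c assume c: "mP \<le> c" "c \<le> z0"
    then show "\<exists>x\<in>{v..z0}. (f^^(2*Suc i)) x = c"
    proof (induction i arbitrary: c)
      case 0 then show ?case using base by simp
    next
      case (Suc i)
      then obtain y where y: "y \<in> {v..z0}" "(f^^(2*Suc i)) y = c" by blast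
      then have "mP \<le> y" "y \<le> z0" using vE by auto
      then obtain x where x: "x \<in> {v..z0}" "(f^^2) x = y" using base by blast
      have "(f^^(2*Suc (Suc i))) x = (f^^(2*Suc i)) ((f^^2) x)"
        using fpa[where f=f and m="2*Suc i" and n=2 and x=x] by simp
      then show ?case using x y by auto
    qed
  qed
  define S3 where "S3 = {x \<in> {u0'..v}. (f ^^ K) x = d}"
  have S3ne: "S3 \<noteq> {}"
  proof -
    have A: "\<And>c. mP \<le> c \<Longrightarrow> c \<le> d \<Longrightarrow> \<exists>x\<in>{u0'..v}. (f^^2) x = c"
    proof -
      fix c assume "mP \<le> c" "c \<le> d"
      then have mn: "min ((f^^2) u0') ((f^^2) v) \<le> c" and mx: "c \<le> max ((f^^2) u0') ((f^^2) v)"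
        using f2v u0b by auto
      have au: "a \<le> u0'" using am db du1 u0b by simp
      show "\<exists>x\<in>{u0'..v}. (f^^2) x = c" using cov[OF au vb u0b(2) mn mx] by simp
    qed
    have B: "\<And>c. mP \<le> c \<Longrightarrow> c \<le> f z0 \<Longrightarrow> \<exists>x\<in>{u0'..v}. (f^^(m+2)) x = c"
    proof -
      fix c assume "mP \<le> c" "c \<le> f z0"
      then have mn: "min ((f^^m) mP) ((f^^m) d) \<le> c" and mx: "c \<le> max ((f^^m) mP) ((f^^m) d)"
        using fmd Pm[OF mPP] by auto
      have db': "d \<le> b" using db vb by simp
      obtain y where y: "y \<in> {mP..d}" "(f^^m) y = c" using cov[OF am db' db(1) mn mx] by blast
      have "mP \<le> y" "y \<le> d" using y by auto
      then obtain x where x: "x \<in> {u0'..v}" "(f^^2) x = y" using A by blast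
      have "(f^^(m+2)) x = (f^^m) ((f^^2) x)" by (simp only: fpa)
      then show "\<exists>x\<in>{u0'..v}. (f^^(m+2)) x = c" using x y by auto
    qed
    have "\<exists>x\<in>{u0'..v}. (f^^K) x = d"
    proof (cases "n = 1")
      case True
      then show ?thesis using B[of d] db dv vz0 wz K_def by simp
    next
      case False
      define i where "i = n - 2"
      have i: "n = Suc (Suc i)" using n_ge False i_def by simp
      obtain y where y: "y \<in> {v..z0}" "(f^^(2*Suc i)) y = d" using L2[of d i] db dv vz0 by auto
      then obtain x where x: "x \<in> {u0'..v}" "(f^^(m+2)) x = y" using B[of y] vE wz by auto
      have "K = 2 * Suc i + (m+2)" using K_def i by simp
      then have "(f^^K) x = (f^^(2*Suc i + (m+2))) x" by simp
      also have "\<dots> = (f^^(2*Suc i)) ((f^^(m+2)) x)" by (simp only: fpa)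
      finally have "(f^^K) x = (f^^(2*Suc i)) ((f^^(m+2)) x)" .
      then show ?thesis using x y by auto
    qed
    then show ?thesis unfolding S3_def by auto
  qed
  have cS3: "continuous_on {u0'..v} (f^^K)" using contS am db du1 u0b vb by auto
  note at3 = attained[OF cS3 S3_def S3ne]
  have muS: "mu \<in> S3" using at3 mu_def S3_def K_def by simp
  have mub: "u0' \<le> mu" "mu \<le> v" "(f^^K) mu = d" using muS unfolding S3_def by auto
  have mumin: "\<And>x. x \<in> S3 \<Longrightarrow> mu \<le> x" using at3 mu_def S3_def K_def by simp
  have mainres: "\<And>y k. u0' \<le> y \<Longrightarrow> y \<le> mu \<Longrightarrow> 0 < k \<Longrightarrow> (f^^k) y = y \<Longrightarrow> odd k \<Longrightarrow> K \<le> k"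
  proof (rule ccontr)
    fix y k assume h: "u0' \<le> y" "y \<le> mu" "0 < k" "(f^^k) y = y" "odd k" "\<not> K \<le> k"
    have yv: "y \<le> v" using h mub by simp
    have PER: "\<And>N. (f^^N) y \<noteq> d"
    proof
      fix N assume hN: "(f^^N) y = d"
      define ss where "ss = 2 + N"
      have ys: "(f^^ss) y = z0"
      proof -
        have "(f^^ss) y = (f^^2) ((f^^N) y)" unfolding ss_def by (simp only: fpa)
        then show ?thesis using hN db by simp
      qed
      have "(f^^(k * ss)) y = y" using fix_iter[OF h(4)] by simp
      moreover have "k * ss = (k * ss - ss) + ss" using h(3) by (simp add: mult_le_cancel2)
      ultimately have "y = (f^^((k * ss - ss) + ss)) y" by metis
      also have "\<dots> = (f^^(k * ss - ss)) ((f^^ss) y)" by (simp only: fpa)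
      finally have "y = (f^^(k * ss - ss)) z0" using ys by simp
      then have "z0 \<le> y" using itz0 by metis
      then show False using yv vz0 by simp
    qed
    have yd: "y \<noteq> u0' \<Longrightarrow> (f^^2) y \<le> d" using after h(1) yv by simp
    have yu0: "y \<noteq> u0'" using PER[of 2] u0b by auto
    have ab2: "a \<le> u0'" "y \<le> b" using am db du1 u0b yv vb by auto
    obtain j where j: "odd j" "5 \<le> j" "j \<le> K" "(f^^j) y \<le> v" "K = j \<Longrightarrow> (f^^j) y \<le> d"
    proof (cases "k = 1")
      case True
      then have "(f^^2) y = y" using h(4) by (simp add: numeral_2_eq_2)
      then show ?thesis using yd yu0 h(1) u0b du1 by simp
    next
      case False
      show ?thesis
      proof (cases "k = 3")
        case True
        have "(f^^5) y = (f^^2) ((f^^3) y)" using fpa[where f=f and m=2 and n=3] by simp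
        then have f5: "(f^^5) y = (f^^2) y" using h(4) True by simp
        have "5 \<le> K" using K_def m_ge n_ge by simp
        then show ?thesis using that[of 5] f5 yd yu0 db dv by simp
      next
        case False
        then have "5 \<le> k" using \<open>k \<noteq> 1\<close> h(3) h(5) by presburger
        then show ?thesis using that[of k] h yv by simp
      qed
    qed
    have fju: "(f^^j) u0' = f z0" using u0odd j by simp
    have covj: "\<And>c. (f^^j) y \<le> c \<Longrightarrow> c \<le> f z0 \<Longrightarrow> \<exists>x\<in>{u0'..y}. (f^^j) x = c"
    proof -
      fix c assume "(f^^j) y \<le> c" "c \<le> f z0"
      then have mn: "min ((f^^j) u0') ((f^^j) y) \<le> c" and mx: "c \<le> max ((f^^j) u0') ((f^^j) y)"
        using fju by auto
      show "\<exists>x\<in>{u0'..y}. (f^^j) x = c" using cov[OF ab2 h(1) mn mx] by simp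
    qed
    have "\<exists>x\<in>{u0'..y}. (f^^K) x = d"
    proof (cases "K = j")
      case True
      then show ?thesis using covj[of d] j dv vz0 wz by simp
    next
      case False
      have "odd K" using K_def m_odd by simp
      define i where "i = (K - j) div 2 - 1"
      have i: "K = 2 * Suc i + j" using False j(1) j(3) \<open>odd K\<close> i_def by presburger
      obtain t where t: "t \<in> {v..z0}" "(f^^(2*Suc i)) t = d" using L2[of d i] db dv vz0 by auto
      then have "(f^^j) y \<le> t" "t \<le> f z0" using j wz by auto
      then obtain x where x: "x \<in> {u0'..y}" "(f^^j) x = t" using covj by blast
      have "(f^^K) x = (f^^(2*Suc i + j)) x" using i by simp
      also have "\<dots> = (f^^(2*Suc i)) ((f^^j) x)" by (simp only: fpa)
      finally show ?thesis using x t by auto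
    qed
    then obtain x where x: "x \<in> {u0'..y}" "(f^^K) x = d" by blast
    then have "x \<in> S3" using h mub unfolding S3_def by auto
    then have "mu \<le> x" using mumin by simp
    then have "x = y" using x h by simp
    then show False using PER x by simp
  qed
  show ?thesis unfolding least_period_def K_def[symmetric] using mainres by auto

qed
end
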